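(* Let $m\ge2$, let $p_1,\dots,p_m>0$ with $\sum_k p_k=1$, and let $X=(X_i)_{1\le i\le n}$, $Y=(Y_i)_{1\le i\le n}$ be independent with i.i.d. letters in $\{\alpha_1,\dots,\alpha_m\}$, $\mathbb{P}(X_1=\alpha_k)=\mathbb{P}(Y_1=\alpha_k)=p_k$. Let $N_1$ be the total number of letters $\alpha_1$ in $X$ and $Y$. Define a random sequence of pairs $(X^k,Y^k)_{0\le k\le 2n}$ of words of length $n$ as follows: $X^0=(X^0_i)_{1\le i\le n}$ and $Y^0=(Y^0_i)_{1\le i\le n}$ are independent with i.i.d. letters in $\{\alpha_2,\dots,\alpha_m\}$ and $\mathbb{P}(X^0_1=\alpha_k)=\mathbb{P}(Y^0_1=\alpha_k)=p_k/(1-p_1)$, $2\le k\le m$; given $(X^0,Y^0),\dots,(X^k,Y^k)$, the pair $(X^{k+1},Y^{k+1})$ is obtained from $(X^k,Y^k)$ by choosing uniformly at random one of the $2n-k$ positions (in $X^k$ or $Y^k$) carrying a letter different from $\alpha_1$ and replacing that letter by $\alpha_1$. Assume $N_1$ is independent of $(X^k,Y^k)_{0\le k\le 2n}$. Then for $k=0,1,\dots,2n$, \[ (X^k,Y^k)\overset{d}{=}(X,Y\mid N_1=k), \] and \[ (X^{N_1},Y^{N_1})\overset{d}{=}(X,Y). \]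
   Context: $\overset{d}{=}$ denotes equality in distribution; $(X,Y\mid N_1=k)$ denotes the conditional law of $(X,Y)$ given $N_1=k$. *)

theory Defs
  imports "HOL-Probability.Probability"
begin

text \<open>Letters alpha_1,...,alpha_m are encoded as the natural numbers 1,...,m.
  A word of length n is a list of length n; a state is a pair of words (X,Y).\<close>

definition letter_pmf :: "(nat \<Rightarrow> real) \<Rightarrow> nat \<Rightarrow> nat pmf" where
  "letter_pmf p m = embed_pmf (\<lambda>k. if k \<in> {1..m} then p k else 0)"

definition letter0_pmf :: "(nat \<Rightarrow> real) \<Rightarrow> nat \<Rightarrow> nat pmf" where
  "letter0_pmf p m = embed_pmf (\<lambda>k. if k \<in> {2..m} then p k / (1 - p 1) else 0)"

fun word_pmf :: "'a pmf \<Rightarrow> nat \<Rightarrow> 'a list pmf" where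
  "word_pmf d 0 = return_pmf []"
| "word_pmf d (Suc n) = bind_pmf d (\<lambda>x. map_pmf (\<lambda>xs. x # xs) (word_pmf d n))"

definition count1 :: "nat list \<times> nat list \<Rightarrow> nat" where
  "count1 s = count_list (fst s) 1 + count_list (snd s) 1"

definition letter_at :: "nat \<Rightarrow> nat list \<times> nat list \<Rightarrow> nat \<Rightarrow> nat" where
  "letter_at n s i = (if i < n then fst s ! i else snd s ! (i - n))"

definition free_pos :: "nat \<Rightarrow> nat list \<times> nat list \<Rightarrow> nat set" where
  "free_pos n s = {i. i < 2 * n \<and> letter_at n s i \<noteq> 1}"

definition set_letter1 :: "nat \<Rightarrow> nat list \<times> nat list \<Rightarrow> nat \<Rightarrow> nat list \<times> nat list" where
  "set_letter1 n s i = (if i < n then ((fst s)[i := 1], snd s) else (fst s, (snd s)[i - n := 1]))"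

text \<open>One step: choose uniformly a position carrying a letter different from alpha_1,
  replace it by alpha_1 (stay put if there is none, which never happens for k < 2n).\<close>
definition step :: "nat \<Rightarrow> nat list \<times> nat list \<Rightarrow> (nat list \<times> nat list) pmf" where
  "step n s = (if free_pos n s = {} then return_pmf s
               else map_pmf (set_letter1 n s) (pmf_of_set (free_pos n s)))"

fun traj :: "(nat \<Rightarrow> real) \<Rightarrow> nat \<Rightarrow> nat \<Rightarrow> nat \<Rightarrow> (nat list \<times> nat list) list pmf" where
  "traj p m n 0 = map_pmf (\<lambda>s. [s])
      (pair_pmf (word_pmf (letter0_pmf p m) n) (word_pmf (letter0_pmf p m) n))"
| "traj p m n (Suc j) = bind_pmf (traj p m n j) (\<lambda>t. map_pmf (\<lambda>s. t @ [s]) (step n (last t)))"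

end

theory Submission
  imports Defs
begin

lemma pmf_word: "pmf (word_pmf d n) xs = (if length xs = n then prod_list (map (pmf d) xs) else 0)"
proof (induction n arbitrary: xs)
  case 0 then show ?case by (cases xs) (auto simp: pmf_return)
next
  case (Suc n)
  show ?case
  proof (cases xs)
    case Nil
    have "pmf (map_pmf ((#) x) (word_pmf d n)) [] = 0" for x by (rule pmf_map_outside) auto
    then show ?thesis using Nil by (simp add: pmf_bind)
  next
    case (Cons y ys)
    have e: "pmf (map_pmf ((#) x) (word_pmf d n)) (y # ys) = (if x = y then pmf (word_pmf d n) ys else 0)" for x
    proof (cases "x = y")
      case True
      then show ?thesis by (simp add: pmf_map_inj')
    next
      case False
      then have "pmf (map_pmf ((#) x) (word_pmf d n)) (y # ys) = 0" by (intro pmf_map_outside) auto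
      then show ?thesis using False by simp
    qed
    have "pmf (word_pmf d (Suc n)) xs = (\<integral>x. (if x = y then pmf (word_pmf d n) ys else 0) \<partial>measure_pmf d)"
      by (simp add: Cons pmf_bind e)
    also have "\<dots> = (\<Sum>a\<in>{y}. (if a = y then pmf (word_pmf d n) ys else 0) * pmf d a)"
      by (rule integral_measure_pmf_real) (auto split: if_splits)
    finally show ?thesis using Suc.IH[of ys] by (simp add: Cons mult.commute)
  qed
qed

locale setting =
  fixes p :: "nat \<Rightarrow> real" and m :: nat
  assumes m2: "m \<ge> 2" and pos: "\<forall>k\<in>{1..m}. p k > 0" and sum1: "(\<Sum>k=1..m. p k) = 1"
begin

lemma pos2: "x \<in> {2..m} \<Longrightarrow> 0 < p x" using pos by auto
lemma pos1: "x \<in> {1..m} \<Longrightarrow> 0 < p x" using pos by auto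

lemma sum_split: "(\<Sum>k=2..m. p k) = 1 - p 1"
proof -
  have "(\<Sum>k=1..m. p k) = p 1 + (\<Sum>k=2..m. p k)"
    using m2 by (subst sum.atLeast_Suc_atMost) (auto simp: numeral_2_eq_2)
  then show ?thesis using sum1 by simp
qed

lemma p1_bounds: "0 < p 1" "p 1 < 1"
proof -
  show "0 < p 1" using pos m2 by auto
  have "p 2 \<le> (\<Sum>k=2..m. p k)"
    using m2 pos2 by (intro member_le_sum) (auto intro: less_imp_le)
  moreover have "p 2 > 0" using pos m2 by auto
  ultimately show "p 1 < 1" using sum_split by simp
qed

lemma pmf_letter: "pmf (letter_pmf p m) x = (if x \<in> {1..m} then p x else 0)"
  unfolding letter_pmf_def
proof (rule pmf_embed_pmf)
  show "0 \<le> (if x \<in> {1..m} then p x else 0)" for x using pos1 by (auto intro: less_imp_le)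
  have "(\<integral>\<^sup>+ x. ennreal (if x \<in> {1..m} then p x else 0) \<partial>count_space UNIV)
      = (\<Sum>x\<in>{1..m}. ennreal (if x \<in> {1..m} then p x else 0))"
    by (rule nn_integral_count_space') auto
  also have "\<dots> = (\<Sum>x\<in>{1..m}. ennreal (p x))" by simp
  also have "\<dots> = ennreal (\<Sum>x\<in>{1..m}. p x)"
    using pos1 by (intro sum_ennreal) (auto intro: less_imp_le)
  finally show "(\<integral>\<^sup>+ x. ennreal (if x \<in> {1..m} then p x else 0) \<partial>count_space UNIV) = 1"
    using sum1 by simp
qed

lemma pmf_letter0: "pmf (letter0_pmf p m) x = (if x \<in> {2..m} then p x / (1 - p 1) else 0)"
  unfolding letter0_pmf_def
proof (rule pmf_embed_pmf)
  show "0 \<le> (if x \<in> {2..m} then p x / (1 - p 1) else 0)" for x using pos2 p1_bounds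
    by (auto intro: less_imp_le)
  have "(\<integral>\<^sup>+ x. ennreal (if x \<in> {2..m} then p x / (1 - p 1) else 0) \<partial>count_space UNIV)
      = (\<Sum>x\<in>{2..m}. ennreal (if x \<in> {2..m} then p x / (1 - p 1) else 0))"
    by (rule nn_integral_count_space') auto
  also have "\<dots> = (\<Sum>x\<in>{2..m}. ennreal (p x / (1 - p 1)))" by simp
  also have "\<dots> = ennreal (\<Sum>x\<in>{2..m}. p x / (1 - p 1))"
    using pos2 p1_bounds by (intro sum_ennreal) (auto intro: less_imp_le)
  also have "(\<Sum>x\<in>{2..m}. p x / (1 - p 1)) = 1"
    using sum_split p1_bounds by (simp add: sum_divide_distrib[symmetric])
  finally show "(\<integral>\<^sup>+ x. ennreal (if x \<in> {2..m} then p x / (1 - p 1) else 0) \<partial>count_space UNIV) = 1"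
    by simp
qed

lemma sum_letter0: "(\<Sum>c\<in>{2..m}. pmf (letter0_pmf p m) c) = 1"
  using sum_split p1_bounds by (simp add: pmf_letter0 sum_divide_distrib[symmetric])

end
definition LL :: "nat list \<times> nat list \<Rightarrow> nat list" where "LL s = fst s @ snd s"
definition valid :: "nat \<Rightarrow> nat list \<times> nat list \<Rightarrow> bool" where
  "valid n s \<longleftrightarrow> length (fst s) = n \<and> length (snd s) = n"
definition splitL :: "nat \<Rightarrow> nat list \<Rightarrow> nat list \<times> nat list" where
  "splitL n l = (take n l, drop n l)"
definition ones :: "nat \<Rightarrow> nat list \<times> nat list \<Rightarrow> nat set" where
  "ones n s = {i. i < 2*n \<and> LL s ! i = 1}"

lemma valid_len: "valid n s \<Longrightarrow> length (LL s) = 2*n"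
  by (simp add: valid_def LL_def)

lemma letter_at_LL: "valid n s \<Longrightarrow> i < 2*n \<Longrightarrow> letter_at n s i = LL s ! i"
  by (auto simp: letter_at_def LL_def valid_def nth_append)

lemma free_pos_LL: "valid n s \<Longrightarrow> free_pos n s = {i. i < 2*n \<and> LL s ! i \<noteq> 1}"
  by (auto simp: free_pos_def letter_at_LL)

lemma valid_eq: "valid n s \<Longrightarrow> valid n t \<Longrightarrow> LL s = LL t \<Longrightarrow> s = t"
  by (cases s; cases t) (auto simp: valid_def LL_def append_eq_append_conv)

lemma splitL: "length l = 2*n \<Longrightarrow> valid n (splitL n l) \<and> LL (splitL n l) = l"
  by (auto simp: valid_def LL_def splitL_def)

lemma set_letter1_LL: "valid n s \<Longrightarrow> i < 2*n \<Longrightarrow>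
   valid n (set_letter1 n s i) \<and> LL (set_letter1 n s i) = (LL s)[i := 1]"
  by (auto simp: valid_def LL_def set_letter1_def list_update_append)

lemma count_list_card: "count_list l a = card {i. i < length l \<and> l ! i = a}"
  by (simp add: count_list_eq_length_filter length_filter_conv_card eq_commute)

lemma count1_ones: "valid n s \<Longrightarrow> count1 s = card (ones n s)"
  by (simp add: count1_def ones_def count_list_card[of "fst s @ snd s", simplified, symmetric]
      valid_len[symmetric] LL_def)

lemma free_ones: "valid n s \<Longrightarrow> free_pos n s = {..<2*n} - ones n s"
  by (auto simp: free_pos_LL ones_def)

lemma card_free: "valid n s \<Longrightarrow> card (free_pos n s) = 2*n - count1 s"
  by (simp add: free_ones count1_ones card_Diff_subset ones_def subset_eq)

lemma finite_free: "finite (free_pos n s)"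
  by (rule finite_subset[of _ "{..<2*n}"]) (auto simp: free_pos_def)

lemma finite_ones: "finite (ones n s)"
  by (rule finite_subset[of _ "{..<2*n}"]) (auto simp: ones_def)

fun mu :: "(nat \<Rightarrow> real) \<Rightarrow> nat \<Rightarrow> nat \<Rightarrow> nat \<Rightarrow> (nat list \<times> nat list) pmf" where
  "mu p m n 0 = pair_pmf (word_pmf (letter0_pmf p m) n) (word_pmf (letter0_pmf p m) n)"
| "mu p m n (Suc k) = bind_pmf (mu p m n k) (step n)"

lemma traj_len: "t \<in> set_pmf (traj p m n j) \<Longrightarrow> length t = Suc j"
  by (induction j arbitrary: t) auto

lemma traj_nth: "k \<le> j \<Longrightarrow> map_pmf (\<lambda>t. t ! k) (traj p m n j) = mu p m n k"
proof (induction j arbitrary: k)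
  case 0
  then show ?case by (simp add: map_pmf_comp)
next
  case (Suc j)
  show ?case
  proof (cases "k \<le> j")
    case True
    have "map_pmf (\<lambda>t. t ! k) (traj p m n (Suc j))
        = bind_pmf (traj p m n j) (\<lambda>t. return_pmf (t ! k))"
      unfolding traj.simps map_bind_pmf
    proof (rule bind_pmf_cong[OF refl])
      fix t assume "t \<in> set_pmf (traj p m n j)"
      then have "length t = Suc j" by (rule traj_len)
      then have "map_pmf (\<lambda>ta. ta ! k) (map_pmf (\<lambda>s. t @ [s]) (step n (last t)))
          = map_pmf (\<lambda>_. t ! k) (step n (last t))"
        using True by (simp add: map_pmf_comp nth_append)
      then show "map_pmf (\<lambda>ta. ta ! k) (map_pmf (\<lambda>s. t @ [s]) (step n (last t))) = return_pmf (t ! k)"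
        by simp
    qed
    also have "\<dots> = map_pmf (\<lambda>t. t ! k) (traj p m n j)" by (simp add: map_pmf_def)
    finally show ?thesis using Suc.IH[OF True] by simp
  next
    case False
    then have k: "k = Suc j" using Suc.prems by simp
    have "map_pmf (\<lambda>t. t ! k) (traj p m n (Suc j))
        = bind_pmf (traj p m n j) (\<lambda>t. step n (t ! j))"
      unfolding traj.simps map_bind_pmf
    proof (rule bind_pmf_cong[OF refl])
      fix t assume "t \<in> set_pmf (traj p m n j)"
      then have "length t = Suc j" by (rule traj_len)
      moreover from this have "last t = t ! j"
        by (metis last_conv_nth list.size(3) nat.distinct(1) diff_Suc_1)
      ultimately show "map_pmf (\<lambda>ta. ta ! k) (map_pmf (\<lambda>s. t @ [s]) (step n (last t))) = step n (t ! j)"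
        using k by (simp add: map_pmf_comp nth_append last_conv_nth)
    qed
    also have "\<dots> = bind_pmf (map_pmf (\<lambda>t. t ! j) (traj p m n j)) (step n)"
      by (simp add: bind_map_pmf)
    finally show ?thesis using Suc.IH[of j] k by simp
  qed
qed
lemma ones_set1: "valid n s \<Longrightarrow> i \<in> free_pos n s \<Longrightarrow>
    ones n (set_letter1 n s i) = insert i (ones n s)"
  by (auto simp: ones_def free_pos_LL set_letter1_LL nth_list_update valid_len)

lemma count1_set1: "valid n s \<Longrightarrow> i \<in> free_pos n s \<Longrightarrow>
    valid n (set_letter1 n s i) \<and> count1 (set_letter1 n s i) = Suc (count1 s)"
proof -
  assume v: "valid n s" and i: "i \<in> free_pos n s"
  then have i2: "i < 2*n" and "i \<notin> ones n s" by (auto simp: free_pos_LL ones_def)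
  have v': "valid n (set_letter1 n s i)" using set_letter1_LL[OF v i2] by simp
  show ?thesis using v' v i `i \<notin> ones n s`
    by (simp add: count1_ones ones_set1 finite_ones)
qed

lemma binom_id: "(N choose k) * (N - k) = (N choose Suc k) * Suc k"
  by (metis binomial_absorb_comp binomial_absorption mult.commute)

context setting
begin

definition hh :: "nat \<Rightarrow> real" where
  "hh x = (if x = 1 then 1 else pmf (letter0_pmf p m) x)"

definition G :: "nat list \<times> nat list \<Rightarrow> real" where
  "G s = prod_list (map hh (LL s))"

lemma G_nth: "valid n s \<Longrightarrow> G s = (\<Prod>i<2*n. hh (LL s ! i))"
  by (simp add: G_def prod.list_conv_set_nth atLeast0LessThan valid_len)

lemma G_support: "G s \<noteq> 0 \<Longrightarrow> x \<in> set (LL s) \<Longrightarrow> x \<noteq> 1 \<Longrightarrow> x \<in> {2..m}"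
  unfolding G_def by (auto simp: prod_list_zero_iff hh_def pmf_letter0 split: if_splits)

lemma mu0: "pmf (mu p m n 0) s = (if valid n s \<and> count1 s = 0 then G s / real (2*n choose 0) else 0)"
proof -
  obtain a b where s: "s = (a, b)" by (cases s)
  have e: "pmf (mu p m n 0) s = (if valid n s then prod_list (map (pmf (letter0_pmf p m)) (LL s)) else 0)"
    by (simp add: s pmf_pair pmf_word valid_def LL_def)
  show ?thesis
  proof (cases "count1 s = 0")
    case True
    then have "1 \<notin> set (LL s)" by (simp add: count1_def LL_def count_list_0_iff)
    then have mm: "map (pmf (letter0_pmf p m)) (LL s) = map hh (LL s)"
      by (intro map_cong) (auto simp: hh_def)
    show ?thesis unfolding e using True by (simp only: mm G_def) simp
  next
    case False
    then have "1 \<in> set (LL s)" by (auto simp: count1_def LL_def count_list_0_iff)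
    moreover have "pmf (letter0_pmf p m) 1 = 0" by (simp add: pmf_letter0)
    ultimately have "prod_list (map (pmf (letter0_pmf p m)) (LL s)) = 0"
      by (force simp: prod_list_zero_iff)
    then show ?thesis using False e by simp
  qed
qed

end
context setting
begin

lemma step_support:
  assumes v: "valid n s" and k: "count1 s < 2*n" and s': "s' \<in> set_pmf (step n s)"
  shows "\<exists>i\<in>free_pos n s. s' = set_letter1 n s i"
proof -
  have "card (free_pos n s) > 0" using card_free[OF v] k by simp
  then have ne: "free_pos n s \<noteq> {}" by auto
  then show ?thesis using s' by (auto simp: step_def finite_free)
qed

lemma mu_pmf: "k \<le> 2*n \<Longrightarrow>
  pmf (mu p m n k) s = (if valid n s \<and> count1 s = k then G s / real (2*n choose k) else 0)"
proof (induction k arbitrary: s)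
  case 0
  show ?case by (rule mu0)
next
  case (Suc k s')
  have IH: "pmf (mu p m n k) s = (if valid n s \<and> count1 s = k then G s / real (2*n choose k) else 0)" for s
    using Suc.IH Suc.prems by simp
  have supp: "valid n s \<and> count1 s = k \<and> G s \<noteq> 0" if "s \<in> set_pmf (mu p m n k)" for s
    using that IH[of s] by (auto simp: set_pmf_iff split: if_splits)
  have kl: "k < 2*n" using Suc.prems by simp
  show ?case
  proof (cases "valid n s' \<and> count1 s' = Suc k")
    case False
    have "s' \<notin> set_pmf (mu p m n (Suc k))"
    proof
      assume "s' \<in> set_pmf (mu p m n (Suc k))"
      then obtain s where s: "s \<in> set_pmf (mu p m n k)" and s'1: "s' \<in> set_pmf (step n s)"
        by auto
      from supp[OF s] have v: "valid n s" and c: "count1 s = k" by auto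
      from step_support[OF v _ s'1] c kl obtain i where "i \<in> free_pos n s" "s' = set_letter1 n s i"
        by auto
      then show False using count1_set1[OF v] c False by auto
    qed
    then have z: "pmf (mu p m n (Suc k)) s' = 0" by (meson pmf_eq_0_set_pmf)
    show ?thesis using False z by (auto simp del: mu.simps)
  next
    case True
    then have v': "valid n s'" and c': "count1 s' = Suc k" by auto
    define l where "l = LL s'"
    define Os where "Os = ones n s'"
    define C where "C = {2..m}"
    define upd where "upd = (\<lambda>(i::nat, c::nat). splitL n (l[i := c]))"
    have lenl: "length l = 2*n" using v' by (simp add: l_def valid_len)
    have cardOs: "card Os = Suc k" using c' v' by (simp add: Os_def count1_ones)
    have finOs: "finite Os" by (simp add: Os_def finite_ones)
    have Osi: "i < 2*n \<and> l ! i = 1" if "i \<in> Os" for i using that by (simp add: Os_def ones_def l_def)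
    have pred: "valid n (upd (i,c)) \<and> LL (upd (i,c)) = l[i := c] \<and> count1 (upd (i,c)) = k
        \<and> G (upd (i,c)) = G s' * pmf (letter0_pmf p m) c
        \<and> pmf (step n (upd (i,c))) s' = 1 / real (2*n - k)"
      if iO: "i \<in> Os" and cC: "c \<in> C" for i c
    proof -
      let ?s = "upd (i,c)"
      have i2: "i < 2*n" and li: "l ! i = 1" using Osi[OF iO] by auto
      have c1: "c \<noteq> 1" using cC by (simp add: C_def)
      have vs: "valid n ?s" and Ls: "LL ?s = l[i := c]"
        using splitL[of "l[i := c]" n] lenl by (simp_all add: upd_def)
      have "ones n ?s = Os - {i}"
        using Ls lenl c1 i2 li by (auto simp: ones_def Os_def l_def[symmetric] nth_list_update split: if_splits)
      then have cs: "count1 ?s = k" using vs cardOs finOs iO by (simp add: count1_ones)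
      have "G ?s = (\<Prod>j<2*n. hh (l[i := c] ! j))" using G_nth[OF vs] Ls by simp
      also have "\<dots> = hh c * (\<Prod>j\<in>{..<2*n} - {i}. hh (l[i := c] ! j))"
        using i2 lenl by (subst prod.remove[of _ i]) auto
      also have "(\<Prod>j\<in>{..<2*n} - {i}. hh (l[i := c] ! j)) = (\<Prod>j\<in>{..<2*n} - {i}. hh (l ! j))"
        by (intro prod.cong) auto
      also have "\<dots> = hh (l ! i) * (\<Prod>j\<in>{..<2*n} - {i}. hh (l ! j))" using li by (simp add: hh_def)
      also have "\<dots> = G s'"
        using G_nth[OF v'] prod.remove[of "{..<2*n}" i "\<lambda>j. hh (l ! j)"] i2 by (simp add: l_def)
      finally have Gs: "G ?s = G s' * pmf (letter0_pmf p m) c" using c1 by (simp add: hh_def)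
      define F where "F = free_pos n ?s"
      have iF: "i \<in> F" using vs Ls i2 lenl c1 by (simp add: F_def free_pos_LL)
      have finF: "finite F" by (simp add: F_def finite_free)
      have cardF: "card F = 2*n - k" using card_free[OF vs] cs by (simp add: F_def)
      have bk: "set_letter1 n ?s i = s'"
      proof (rule valid_eq)
        show "valid n (set_letter1 n ?s i)" using set_letter1_LL[OF vs i2] by simp
        show "valid n s'" by (rule v')
        have "l[i := c, i := 1] = l" using li by (metis list_update_id list_update_overwrite)
        then show "LL (set_letter1 n ?s i) = LL s'" using set_letter1_LL[OF vs i2] Ls by (simp add: l_def)
      qed
      have "F \<inter> set_letter1 n ?s -` {s'} = {i}"
      proof -
        have "j = i" if jF: "j \<in> F" and e: "set_letter1 n ?s j = s'" for j
        proof -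
          have j2: "j < 2*n" using jF by (simp add: F_def free_pos_def)
          have "LL (set_letter1 n ?s j) = l[i := c, j := 1]" using set_letter1_LL[OF vs j2] Ls by simp
          then have "l[i := c, j := 1] = l" using e by (simp add: l_def)
          then have "l[i := c, j := 1] ! i = l ! i" by simp
          then show "j = i" using i2 lenl li c1 by (cases "j = i") auto
        qed
        then show ?thesis using iF bk by auto
      qed
      then have "pmf (step n ?s) s' = 1 / real (2*n - k)"
        using iF finF cardF by (auto simp: step_def F_def[symmetric] pmf_map measure_pmf_of_set)
      then show ?thesis using vs Ls cs Gs by simp
    qed
    have inj: "inj_on upd (Os \<times> C)"
    proof (rule inj_onI, clarify)
      fix i c j d assume iO: "i \<in> Os" and cC: "c \<in> C" and jO: "j \<in> Os" and dC: "d \<in> C"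
        and e: "upd (i, c) = upd (j, d)"
      then have "l[i := c] = l[j := d]" using pred[OF iO cC] pred[OF jO dC] by metis
      then have e1: "l[i := c] ! i = l[j := d] ! i" and e2: "l[i := c] ! j = l[j := d] ! j" by simp_all
      have "i < length l" "j < length l" using Osi[OF iO] Osi[OF jO] lenl by auto
      then show "i = j \<and> c = d" using e1 e2 Osi[OF iO] Osi[OF jO] cC dC
        by (cases "i = j") (auto simp: C_def)
    qed
    have finA: "finite (upd ` (Os \<times> C))" using finOs by (simp add: C_def)
    have inA: "s \<in> upd ` (Os \<times> C)" if s: "s \<in> set_pmf (mu p m n k)" and nz: "pmf (step n s) s' \<noteq> 0" for s
    proof -
      from supp[OF s] have v: "valid n s" and c: "count1 s = k" and G0: "G s \<noteq> 0" by auto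
      from nz have "s' \<in> set_pmf (step n s)" by (simp add: set_pmf_iff)
      from step_support[OF v _ this] c kl obtain i where iF: "i \<in> free_pos n s"
        and s'e: "s' = set_letter1 n s i" by auto
      have i2: "i < 2*n" and li: "LL s ! i \<noteq> 1" using iF v by (auto simp: free_pos_LL)
      have Ll: "l = (LL s)[i := 1]" using set_letter1_LL[OF v i2] s'e by (simp add: l_def)
      have iO: "i \<in> Os" using i2 Ll valid_len[OF v] by (simp add: Os_def ones_def l_def[symmetric])
      have "LL s ! i \<in> set (LL s)" using i2 valid_len[OF v] by simp
      then have cC: "LL s ! i \<in> C" using G_support[OF G0 _ li] by (simp add: C_def)
      have "upd (i, LL s ! i) = s"
      proof (rule valid_eq)
        show "valid n (upd (i, LL s ! i))" using pred[OF iO cC] by simp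
        show "valid n s" by (rule v)
        show "LL (upd (i, LL s ! i)) = LL s" using pred[OF iO cC] Ll by simp
      qed
      then show ?thesis using iO cC by force
    qed
    have "pmf (mu p m n (Suc k)) s' = (\<integral>s. pmf (step n s) s' \<partial>measure_pmf (mu p m n k))"
      by (simp add: pmf_bind)
    also have "\<dots> = (\<Sum>a\<in>upd ` (Os \<times> C). pmf (step n a) s' * pmf (mu p m n k) a)"
      by (rule integral_measure_pmf_real[OF finA inA])
    also have "\<dots> = (\<Sum>x\<in>Os \<times> C. pmf (step n (upd x)) s' * pmf (mu p m n k) (upd x))"
      by (rule sum.reindex[OF inj, unfolded comp_def])
    also have "\<dots> = (\<Sum>x\<in>Os \<times> C. (G s' / (real (2*n choose k) * real (2*n - k))) * pmf (letter0_pmf p m) (snd x))"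
    proof (rule sum.cong[OF refl], clarify)
      fix i c assume iO: "i \<in> Os" and cC: "c \<in> C"
      show "pmf (step n (upd (i, c))) s' * pmf (mu p m n k) (upd (i, c)) =
          G s' / (real (2 * n choose k) * real (2 * n - k)) * pmf (letter0_pmf p m) (snd (i, c))"
        using pred[OF iO cC] IH[of "upd (i,c)"] by simp
    qed
    also have "\<dots> = (G s' / (real (2*n choose k) * real (2*n - k))) * (\<Sum>i\<in>Os. \<Sum>c\<in>C. pmf (letter0_pmf p m) c)"
    proof -
      have "(\<Sum>x\<in>Os \<times> C. pmf (letter0_pmf p m) (snd x)) = (\<Sum>i\<in>Os. \<Sum>c\<in>C. pmf (letter0_pmf p m) c)"
        by (simp add: sum.cartesian_product' sum.Sigma[symmetric])
      then show ?thesis by (simp only: sum_distrib_left[symmetric])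
    qed
    also have "\<dots> = G s' * real (Suc k) / (real (2*n choose k) * real (2*n - k))"
      using sum_letter0 cardOs by (simp add: C_def)
    also have "\<dots> = G s' / real (2*n choose Suc k)"
    proof -
      have eq: "real (2*n choose k) * real (2*n - k) = real (2*n choose Suc k) * real (Suc k)"
        using binom_id[of "2*n" k] by (metis of_nat_mult)
      have "real (Suc k) \<noteq> 0" by simp
      then show ?thesis unfolding eq by (rule nonzero_mult_divide_mult_cancel_right)
    qed
    finally show ?thesis using True by simp
  qed
qed

end
lemma count_list_rep: "count_list (replicate k x) y = (if x = y then k else 0)"
  by (induction k) auto

lemma count1_LL: "count1 s = count_list (LL s) 1"
  by (simp add: count1_def LL_def)

lemma pmf_prop:
  fixes \<mu> \<nu> :: "'a pmf"
  assumes h: "\<And>x. pmf \<mu> x = K * pmf \<nu> x"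
  shows "\<mu> = \<nu>"
proof -
  have tot: "(\<integral>\<^sup>+ x. ennreal (pmf q x) \<partial>count_space UNIV) = 1" for q :: "'a pmf"
    using type_definition.Rep[OF td_pmf_embed_pmf, of q] by simp
  obtain x0 where x0: "x0 \<in> set_pmf \<nu>" using set_pmf_not_empty[of \<nu>] by blast
  then have "pmf \<nu> x0 > 0" by (simp add: pmf_positive)
  moreover have "pmf \<mu> x0 \<ge> 0" by simp
  ultimately have K0: "K \<ge> 0" using h[of x0] by (simp add: zero_le_mult_iff)
  have "1 = (\<integral>\<^sup>+ x. ennreal (pmf \<mu> x) \<partial>count_space UNIV)" using tot by simp
  also have "\<dots> = (\<integral>\<^sup>+ x. ennreal K * ennreal (pmf \<nu> x) \<partial>count_space UNIV)"
    using K0 by (simp add: h ennreal_mult)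
  also have "\<dots> = ennreal K" using tot by (simp add: nn_integral_cmult)
  finally have "K = 1" using K0 by simp
  then show ?thesis using h by (intro pmf_eqI) simp
qed

context setting
begin

lemma prod_a: "prod_list (map (\<lambda>x. if x = 1 then p 1 else 1 - p 1) l)
   = p 1 ^ count_list l 1 * (1 - p 1) ^ (length l - count_list l 1)"
  by (induction l) (auto simp: Suc_diff_le count_le_length)

lemma prod_mult_list: "prod_list (map (\<lambda>x. f x * g x) l) = prod_list (map f l) * prod_list (map (g :: nat \<Rightarrow> real) l)"
  by (induction l) auto

lemma letter_split: "pmf (letter_pmf p m) x = (if x = 1 then p 1 else 1 - p 1) * hh x"
  using p1_bounds m2 by (auto simp: pmf_letter hh_def pmf_letter0)

lemma XY_pmf: "pmf (pair_pmf (word_pmf (letter_pmf p m) n) (word_pmf (letter_pmf p m) n)) s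
  = (if valid n s then p 1 ^ count1 s * (1 - p 1) ^ (2*n - count1 s) * G s else 0)"
proof -
  obtain a b where s: "s = (a, b)" by (cases s)
  have "pmf (pair_pmf (word_pmf (letter_pmf p m) n) (word_pmf (letter_pmf p m) n)) s
     = (if valid n s then prod_list (map (pmf (letter_pmf p m)) (LL s)) else 0)"
    by (simp add: s pmf_pair pmf_word valid_def LL_def)
  also have "\<dots> = (if valid n s then p 1 ^ count1 s * (1 - p 1) ^ (2*n - count1 s) * G s else 0)"
    unfolding letter_split prod_mult_list prod_a G_def
    by (auto simp: count1_def LL_def valid_def mult_2)
  finally show ?thesis .
qed

lemma pos_G: "0 < pmf (letter0_pmf p m) 2"
  using pos2[of 2] m2 p1_bounds by (simp add: pmf_letter0)

end

theorem lemma2p1: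
  fixes p :: "nat \<Rightarrow> real" and m n :: nat
  assumes "m \<ge> 2"
    and "\<forall>k\<in>{1..m}. p k > 0"
    and "(\<Sum>k=1..m. p k) = 1"
  defines "XY \<equiv> pair_pmf (word_pmf (letter_pmf p m) n) (word_pmf (letter_pmf p m) n)"
    and "T \<equiv> traj p m n (2 * n)"
  shows "(\<forall>k \<le> 2 * n. map_pmf (\<lambda>t. t ! k) T = cond_pmf XY {s. count1 s = k})
         \<and> map_pmf (\<lambda>(N, t). t ! N) (pair_pmf (map_pmf count1 XY) T) = XY"
proof -
  interpret setting p m using assms(1-3) by unfold_locales
  have supp: "valid n s \<and> count1 s \<le> 2*n" if "s \<in> set_pmf XY" for s
  proof -
    have "pmf XY s \<noteq> 0" using that by (simp add: set_pmf_iff)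
    then have v: "valid n s" unfolding XY_def XY_pmf by (auto split: if_splits)
    then show ?thesis using count_le_length[of "fst s" 1] count_le_length[of "snd s" 1]
      by (simp add: valid_def count1_def)
  qed
  have part1: "map_pmf (\<lambda>t. t ! k) T = cond_pmf XY {s. count1 s = k}" if k: "k \<le> 2*n" for k
  proof -
    define l0 where "l0 = replicate k (1::nat) @ replicate (2*n - k) 2"
    define s0 where "s0 = splitL n l0"
    have "length l0 = 2*n" using k by (simp add: l0_def)
    then have v0: "valid n s0" and L0: "LL s0 = l0" using splitL by (auto simp: s0_def)
    have c0: "count1 s0 = k"
      using L0 by (simp add: count1_LL l0_def count_list_rep)
    have G0: "G s0 > 0" using L0 pos_G by (simp add: G_def l0_def hh_def)
    have "pmf XY s0 > 0" unfolding XY_def XY_pmf using v0 G0 p1_bounds by simp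
    then have "s0 \<in> set_pmf XY" by (simp add: set_pmf_iff)
    then have ne: "set_pmf XY \<inter> {s. count1 s = k} \<noteq> {}" using c0 by blast
    define P where "P = measure_pmf.prob XY {s. count1 s = k}"
    define K where "K = p 1 ^ k * (1 - p 1) ^ (2*n - k) * real (2*n choose k) / P"
    have Cpos: "real (2*n choose k) > 0" using k by simp
    have "pmf (cond_pmf XY {s. count1 s = k}) s = K * pmf (mu p m n k) s" for s
    proof -
      have "pmf (cond_pmf XY {s. count1 s = k}) s = (if count1 s = k then pmf XY s / P else 0)"
        using pmf_cond[OF ne] by (simp add: P_def)
      also have "\<dots> = K * pmf (mu p m n k) s"
        unfolding mu_pmf[OF k] XY_def XY_pmf K_def using Cpos by auto
      finally show ?thesis .
    qed
    then have "cond_pmf XY {s. count1 s = k} = mu p m n k" by (rule pmf_prop)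
    then show ?thesis using traj_nth[OF k] by (simp add: T_def)
  qed
  have "map_pmf (\<lambda>(N, t). t ! N) (pair_pmf (map_pmf count1 XY) T)
      = bind_pmf (map_pmf count1 XY) (\<lambda>N. map_pmf (\<lambda>t. t ! N) T)"
    by (simp add: pair_pmf_def map_bind_pmf map_pmf_def[symmetric] map_pmf_comp)
  also have "\<dots> = bind_pmf (map_pmf count1 XY) (\<lambda>N. cond_pmf XY {s. count1 s = N})"
    by (rule bind_pmf_cong[OF refl]) (use supp part1 in auto)
  also have "\<dots> = bind_pmf XY (\<lambda>x. cond_pmf XY {y. count1 x = count1 y})"
    by (simp add: bind_map_pmf eq_commute)
  also have "\<dots> = XY"
    by (rule bind_cond_pmf_cancel) (auto simp: eq_commute)
  finally show ?thesis using part1 by simp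
qed

end
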